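(* Let $r\ge2$ and let $\tau$ be the substitution on $\{1,2,\dots,r\}$ defined by $\tau(i)=i(i+1)\cdots r\,1\,2\cdots(i-1)$ for $1\le i\le r$ (so $\tau(1)=12\cdots r$, $\tau(2)=23\cdots r1$, $\dots$, $\tau(r)=r12\cdots(r-1)$). For $1\le i\le r$ let $x^{(i)}$ be the fixed point of $\tau$ beginning with the letter $i$, and let $X$ be the one-sided subshift generated by $\tau$. Then each $x^{(i)}$ is distal in $X$: the only point of $X$ proximal to $x^{(i)}$ is $x^{(i)}$ itself. In particular each of the two fixed points of the Thue–Morse substitution ($r=2$) is distal.
   Context: $X$ is the shift-orbit closure in $\{1,\dots,r\}^{\mathbb N}$ of a fixed point of the (primitive) substitution $\tau$, with $T$ the shift map; it does not depend on the choice of fixed point. Two points $x,y\in X$ are proximal if for every $N>0$ there exists $n\in\mathbb N$ with $x_nx_{n+1}\cdots x_{n+N}=y_ny_{n+1}\cdots y_{n+N}$. A point $x\in X$ is distal if the only point of $X$ proximal to $x$ is $x$. *)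

theory Defs
  imports "HOL-Analysis.Analysis"
begin

definition tau :: "nat \<Rightarrow> nat \<Rightarrow> nat list" where
  "tau r i = [i..<r+1] @ [1..<i]"

text \<open>A sequence x is a fixed point of tau (every image tau(a) has length r):
  applying tau letter by letter to x and concatenating gives x again.\<close>
definition is_tau_fixed_point :: "nat \<Rightarrow> (nat \<Rightarrow> nat) \<Rightarrow> bool" where
  "is_tau_fixed_point r x \<longleftrightarrow> (\<forall>n j. j < r \<longrightarrow> x (r * n + j) = tau r (x n) ! j)"

definition shift :: "(nat \<Rightarrow> 'a) \<Rightarrow> (nat \<Rightarrow> 'a)" where
  "shift x = (\<lambda>n. x (Suc n))"

definition orbit_closure :: "(nat \<Rightarrow> nat) \<Rightarrow> (nat \<Rightarrow> nat) set" where
  "orbit_closure x = closure {(shift ^^ k) x | k. True}"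

definition proximal :: "(nat \<Rightarrow> 'a) \<Rightarrow> (nat \<Rightarrow> 'a) \<Rightarrow> bool" where
  "proximal x y \<longleftrightarrow> (\<forall>N>0. \<exists>n. \<forall>k\<le>N. x (n + k) = y (n + k))"

definition distal_in :: "(nat \<Rightarrow> 'a) set \<Rightarrow> (nat \<Rightarrow> 'a) \<Rightarrow> bool" where
  "distal_in X x \<longleftrightarrow> (\<forall>y\<in>X. proximal x y \<longrightarrow> y = x)"

end

theory Submission
  imports Defs
begin

function ds :: "nat \<Rightarrow> nat \<Rightarrow> nat" where
  "ds r m = (if r < 2 \<or> m = 0 then 0 else m mod r + ds r (m div r))"
  by auto
termination
  by (relation "Wellfounded.measure (\<lambda>(r,m). m)") auto

declare ds.simps[simp del]

lemma ds_zero[simp]: "ds r 0 = 0"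
  by (subst ds.simps) simp

lemma ds_step: assumes "r \<ge> 2" "j < r" shows "ds r (r*n + j) = ds r n + j"
proof (cases "r*n+j = 0")
  case True
  then have "n = 0" "j = 0" using assms by auto
  then show ?thesis by simp
next
  case False
  then show ?thesis using assms by (subst ds.simps) auto
qed

lemma ds_pow: assumes "r \<ge> 2" shows "m < r^k \<Longrightarrow> ds r (r^k * b + m) = ds r b + ds r m"
proof (induction k arbitrary: b m)
  case 0
  then show ?case by simp
next
  case (Suc k)
  have m: "m = r * (m div r) + m mod r" by simp
  have md: "m div r < r^k" using Suc.prems by (simp add: less_mult_imp_div_less mult.commute)
  have "r^(Suc k) * b + m = r * (r^k*b + m div r) + m mod r"
    by (subst m) (simp add: algebra_simps)
  then have "ds r (r^(Suc k) * b + m) = ds r (r^k*b + m div r) + m mod r"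
    using ds_step[OF assms] assms by simp
  also have "\<dots> = ds r b + (ds r (m div r) + m mod r)" using Suc.IH md by simp
  also have "ds r (m div r) + m mod r = ds r m"
    using ds_step[OF assms, of "m mod r" "m div r"] assms m by simp
  finally show ?case .
qed

lemma tau_nth: assumes "1 \<le> a" "a \<le> r" "j < r" shows "tau r a ! j = (a - 1 + j) mod r + 1"
proof (cases "j < r + 1 - a")
  case True
  then have "(a - 1 + j) mod r = a - 1 + j" using assms by simp
  then show ?thesis using assms True by (simp add: tau_def nth_append; arith)
next
  case False
  then have "(a - 1 + j) mod r = a - 1 + j - r"
    using assms by (simp add: mod_if)
  then show ?thesis using assms False by (simp add: tau_def nth_append; arith)
qed

lemma x_formula:
  assumes "r \<ge> 2" "1 \<le> i" "i \<le> r" "is_tau_fixed_point r x" "x 0 = i"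
  shows "x m = (i - 1 + ds r m) mod r + 1"
proof (induction m rule: less_induct)
  case (less m)
  show ?case
  proof (cases "m = 0")
    case True
    then show ?thesis using assms by simp
  next
    case False
    have md: "m div r < m" using False assms by simp
    have m: "m = r * (m div r) + m mod r" by simp
    have mr: "m mod r < r" using assms by simp
    have "x m = tau r (x (m div r)) ! (m mod r)"
      using assms(4) mr m unfolding is_tau_fixed_point_def by metis
    also have "\<dots> = ((i - 1 + ds r (m div r)) mod r + m mod r) mod r + 1"
    proof -
      have "(i - 1 + ds r (m div r)) mod r < r" using assms by simp
      then have "x (m div r) \<le> r" using less.IH[OF md] by simp
      then show ?thesis
        using less.IH[OF md] tau_nth[of "x (m div r)" r "m mod r"] assms mr by simp
    qed
    also have "\<dots> = (i - 1 + ds r m) mod r + 1"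
      using ds_step[OF assms(1) mr, of "m div r"] m by (simp add: mod_add_left_eq add.assoc)
    finally show ?thesis .
  qed
qed

lemma modcong: "(x::nat) mod r = y mod r \<Longrightarrow> (x + c) mod r = (y + c) mod r"
  by (metis mod_add_left_eq)

lemma contra1: assumes "(a + (r - 1)) mod r = z mod r" "(a + 1) mod r = (z + 1) mod r" "(r::nat) \<ge> 2" shows False
proof -
  have "(a + 1 + (r - 1)) mod r = (z + 1 + (r-1)) mod r" using modcong[OF assms(2)] .
  then have "(a + r) mod r = (z + r) mod r" using assms(3) by simp
  then have az: "a mod r = z mod r" by simp
  have "(a + (r - 1) + 1) mod r = (a + 1) mod r" using modcong[OF assms(1)[unfolded az[symmetric]]] .
  then have "(a + r) mod r = (a+1) mod r" using assms(3) by simp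
  then have "a mod r = Suc a mod r" by simp
  then show False using assms(3) by (simp add: mod_Suc split: if_splits)
qed

lemma mod_sq: "(w::nat) mod (r^2) = r - 1 \<Longrightarrow> r \<ge> 2 \<Longrightarrow> w mod r = r - 1"
proof -
  assume a: "w mod (r^2) = r - 1" "r \<ge> 2"
  have "w mod r = (w mod r^2) mod r" by (simp add: mod_mod_cancel power2_eq_square)
  then show ?thesis using a by simp
qed

lemma j0_lemma: "r \<ge> 2 \<Longrightarrow> (u + ((r^2 + (r-1) - u mod r^2) mod r^2)) mod r^2 = (r::nat) - 1"
proof -
  assume r: "r \<ge> 2"
  have p: "0 < r^2" using r by simp
  have "u mod r^2 < r^2" using p by simp
  have "(u + ((r^2 + (r-1) - u mod r^2) mod r^2)) mod r^2 = (u mod r^2 + (r^2 + (r-1) - u mod r^2)) mod r^2"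
    by (metis mod_add_eq mod_mod_trivial)
  also have "u mod r^2 + (r^2 + (r-1) - u mod r^2) = r^2 + (r - 1)" using \<open>u mod r^2 < r^2\<close> by simp
  also have "(r^2 + (r-1)) mod r^2 = r - 1"
  proof -
    have "r \<le> r^2" using r by (simp add: power2_eq_square)
    then have "r - 1 < r^2" using r by linarith
    then show ?thesis by simp
  qed
  finally show ?thesis .
qed

lemma Suc_mod_inj: assumes "Suc a mod r = Suc b mod r" "(r::nat) > 0" shows "a mod r = b mod r"
proof -
  have "(Suc a + (r - 1)) mod r = (Suc b + (r - 1)) mod r" using modcong[OF assms(1)] .
  then show ?thesis using assms(2) by simp
qed

lemma modcancel: "(x + c) mod r = (y + c) mod r \<Longrightarrow> (r::nat) > 0 \<Longrightarrow> x mod r = y mod r"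
  by (induction c) (auto dest: Suc_mod_inj)

lemma ds_succ: assumes r: "r \<ge> 2" and "z mod r \<noteq> r - 1" shows "ds r (z + 1) = ds r z + 1"
proof -
  have "z mod r < r" using r by simp
  then have lt: "z mod r + 1 < r" using assms(2) by linarith
  have e: "z + 1 = r * (z div r) + (z mod r + 1)" by simp
  have "ds r (z+1) = ds r (r * (z div r) + (z mod r + 1))" by (simp only: e)
  also have "\<dots> = ds r (z div r) + (z mod r + 1)" using ds_step[OF r lt] .
  finally have "ds r (z+1) = ds r (z div r) + (z mod r + 1)" .
  moreover have "ds r z = ds r (z div r) + z mod r"
    using ds_step[OF r, of "z mod r" "z div r"] r by simp
  ultimately show ?thesis by simp
qed

lemma rec1: assumes r: "r \<ge> 2" and N: "r^2 \<le> N"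
  and eq: "\<forall>j\<le>N. ds r (u+j) mod r = ds r (v+j) mod r"
  shows "u mod r = v mod r"
proof -
  define j0 where "j0 = (r^2 + (r-1) - u mod r^2) mod r^2"
  have j0: "j0 < r^2" using r by (simp add: j0_def)
  define w where "w = u + j0"
  have wm: "w mod r^2 = r - 1" unfolding w_def j0_def using j0_lemma[OF r] .
  have wmr: "w mod r = r - 1" using mod_sq[OF wm r] .
  define Q where "Q = w div r^2"
  have "w = r^2 * Q + w mod r^2" unfolding Q_def by simp
  also have "\<dots> = r * (r * Q) + (r - 1)" using wm by (simp add: power2_eq_square)
  finally have w: "w = r * (r * Q) + (r - 1)" .
  have r1: "r - 1 < r" using r by simp
  have dsw: "ds r w = ds r Q + (r-1)"
    using ds_step[OF r r1, of "r*Q"] ds_step[OF r, of 0 Q] r w by simp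
  have w1: "w + 1 = r * (r*Q + 1) + 0" using w r by (simp add: algebra_simps)
  have dsw1: "ds r (w+1) = ds r Q + 1"
    using ds_step[OF r, of 0 "r*Q+1"] ds_step[OF r, of 1 Q] r w1 by simp
  define z where "z = v + j0"
  have e1: "ds r w mod r = ds r z mod r" using eq j0 N unfolding w_def z_def by simp
  have e2: "ds r (w+1) mod r = ds r (z+1) mod r" using eq[rule_format, of "j0+1"] j0 N
    unfolding w_def z_def by (simp add: add.assoc)
  have "z mod r = r - 1"
  proof (rule ccontr)
    assume "z mod r \<noteq> r - 1"
    then have "ds r (z+1) = ds r z + 1" using ds_succ[OF r] by simp
    then show False using contra1[of "ds r Q" r "ds r z"] e1 e2 dsw dsw1 r by simp
  qed
  then have "(u + j0) mod r = (v + j0) mod r" using wmr unfolding w_def z_def by simp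
  then show ?thesis using modcancel[of u j0 r v] r by simp
qed

fun Bd :: "nat \<Rightarrow> nat \<Rightarrow> nat" where
  "Bd r 0 = 0" | "Bd r (Suc k) = r^2 + r * Bd r k + r"

lemma recog: "r \<ge> 2 \<Longrightarrow> Bd r k \<le> N \<Longrightarrow> \<forall>j\<le>N. ds r (u+j) mod r = ds r (v+j) mod r
  \<Longrightarrow> u mod r^k = v mod r^k"
proof (induction k arbitrary: u v N)
  case 0
  then show ?case by simp
next
  case (Suc k)
  have r: "r \<ge> 2" by fact
  have uv: "u mod r = v mod r" using rec1[OF r _ Suc.prems(3)] Suc.prems(2) by simp
  define q where "q = (r - u mod r) mod r"
  have q: "q < r" using r by (simp add: q_def)
  have uq: "(u + q) mod r = 0"
  proof (cases "u mod r = 0")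
    case True then show ?thesis by (simp add: q_def)
  next
    case False
    then have "q = r - u mod r" using r by (simp add: q_def)
    moreover have "u = r*(u div r) + u mod r" by simp
    moreover have "u mod r < r" using r by simp
    ultimately have "u + q = r * (u div r) + r" by linarith
    then show ?thesis by simp
  qed
  have vq: "(v + q) mod r = 0" using uq modcong[OF uv[symmetric], of q] by simp
  define u1 where "u1 = (u + q) div r"
  define v1 where "v1 = (v + q) div r"
  have u1: "u + q = r * u1" using uq div_mult_mod_eq[of "u+q" r] unfolding u1_def by (simp add: mult.commute)
  have v1: "v + q = r * v1" using vq div_mult_mod_eq[of "v+q" r] unfolding v1_def by (simp add: mult.commute)
  have eq1: "\<forall>m\<le>Bd r k. ds r (u1+m) mod r = ds r (v1+m) mod r"
  proof (intro allI impI)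
    fix m assume m: "m \<le> Bd r k"
    have rm: "r * m \<le> r * Bd r k" using m by (rule mult_le_mono2)
    have "Bd r (Suc k) \<le> N" by fact
    then have "r^2 + r * Bd r k + r \<le> N" by simp
    then have "r * m + q \<le> N" using rm q by linarith
    then have e: "ds r (u + (q + r*m)) mod r = ds r (v + (q + r*m)) mod r"
      using Suc.prems(3)[rule_format, of "q + r*m"] by simp
    have "u + (q + r*m) = r * (u1 + m) + 0" using u1 by (simp add: algebra_simps)
    moreover have "v + (q + r*m) = r * (v1 + m) + 0" using v1 by (simp add: algebra_simps)
    ultimately show "ds r (u1+m) mod r = ds r (v1+m) mod r"
      using e ds_step[OF r, of 0 "u1+m"] ds_step[OF r, of 0 "v1+m"] r by simp
  qed
  have "u1 mod r^k = v1 mod r^k" using Suc.IH[OF r _ eq1] by simp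
  then have "(r * u1) mod (r * r^k) = (r * v1) mod (r * r^k)" by (simp add: mod_mult_mult1)
  then have "(u + q) mod r^(Suc k) = (v + q) mod r^(Suc k)" using u1 v1 by simp
  then show ?case using modcancel[of u q "r^Suc k" v] r by simp
qed

lemma shift_pow: "(shift ^^ k) x = (\<lambda>n. x (k + n))"
  by (induction k) (auto simp: shift_def)

lemma closure_char:
  fixes x y :: "nat \<Rightarrow> nat"
  assumes "y \<in> orbit_closure x"
  shows "\<exists>a. \<forall>m\<le>L. y m = x (a + m)"
proof -
  define U where "U = {f :: nat \<Rightarrow> nat. \<forall>i\<in>{..L}. f ((\<lambda>i. i) i) \<in> {y i}}"
  have "open U" unfolding U_def by (rule product_topology_basis') (auto simp: open_discrete)
  moreover have "y \<in> U" unfolding U_def by simp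
  ultimately have "U \<inter> {(shift ^^ k) x | k. True} \<noteq> {}"
    using assms open_Int_closure_eq_empty[of U "{(shift ^^ k) x | k. True}"]
    unfolding orbit_closure_def by blast
  then obtain k where "(shift ^^ k) x \<in> U" by blast
  then have "\<forall>m\<le>L. y m = x (k + m)" unfolding U_def shift_pow by auto
  then show ?thesis by blast
qed

lemma less_pow: "(r::nat) \<ge> 2 \<Longrightarrow> m < r ^ m"
proof (induction m)
  case 0 then show ?case by simp
next
  case (Suc m)
  have "r^m \<ge> 1" using Suc.prems by simp
  have "2 * r^m \<le> r * r^m" using Suc.prems by (rule mult_le_mono1)
  moreover have "m < r^m" using Suc by simp
  moreover have "r^Suc m = r * r^m" by simp
  ultimately show ?case using \<open>r^m \<ge> 1\<close> by linarith
qed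

theorem mainTheorem17:
  fixes r i :: nat and x :: "nat \<Rightarrow> nat"
  assumes "r \<ge> 2" and "1 \<le> i" and "i \<le> r"
    and "is_tau_fixed_point r x" and "x 0 = i"
  shows "x \<in> orbit_closure x \<and> distal_in (orbit_closure x) x"
proof
  have "x \<in> {(shift ^^ k) x | k. True}" by (intro CollectI exI[of _ 0]) simp
  then show "x \<in> orbit_closure x" unfolding orbit_closure_def by (rule closure_subset[THEN subsetD])
next
  have r: "r \<ge> 2" by fact
  define c where "c = i - 1"
  have c: "c < r" using assms unfolding c_def by simp
  have xf: "\<And>m. x m = (c + ds r m) mod r + 1" unfolding c_def using x_formula[OF assms] .
  have xeq: "ds r p mod r = ds r q mod r" if "x p = x q" for p q
  proof -
    have "(c + ds r p) mod r + 1 = (c + ds r q) mod r + 1" using that unfolding xf .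
    then have "(ds r p + c) mod r = (ds r q + c) mod r" by (simp add: add.commute)
    moreover have "0 < r" using r by simp
    ultimately show ?thesis by (rule modcancel)
  qed
  show "distal_in (orbit_closure x) x"
    unfolding distal_in_def
  proof (intro ballI impI)
    fix y assume yX: "y \<in> orbit_closure x" and prox: "proximal x y"
    obtain a0 where "\<forall>m\<le>0. y m = x (a0 + m)" using closure_char[OF yX] by blast
    then have y0: "y 0 = x a0" by simp
    define e where "e = y 0 - 1"
    have e: "e = (c + ds r a0) mod r" unfolding e_def y0 xf by simp
    have ey: "y m = (e + ds r m) mod r + 1" for m
    proof -
      define N where "N = Bd r m + 1"
      obtain n where n: "\<forall>j\<le>N. x (n + j) = y (n + j)" using prox unfolding proximal_def N_def by auto
      obtain a where a: "\<forall>t\<le>n + N + m. y t = x (a + t)" using closure_char[OF yX] by blast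
      have "\<forall>j\<le>N. ds r (n+j) mod r = ds r (a+n+j) mod r"
      proof (intro allI impI)
        fix j assume "j \<le> N"
        then have h1: "x (n + j) = y (n + j)" using n by blast
        have "n + j \<le> n + N + m" using \<open>j \<le> N\<close> by simp
        then have "y (n + j) = x (a + (n + j))" using a by blast
        with h1 have "x (n + j) = x (a + (n + j))" by simp
        then have "ds r (n+j) mod r = ds r (a+(n+j)) mod r" by (rule xeq)
        then show "ds r (n+j) mod r = ds r (a+n+j) mod r" by (simp add: add.assoc)
      qed
      moreover have "Bd r m \<le> N" unfolding N_def by simp
      ultimately have "n mod r^m = (a + n) mod r^m"
        using recog[OF r] by blast
      then have "(0 + n) mod r^m = (a + n) mod r^m" by simp
      moreover have pos: "0 < r^m" using r by simp
      ultimately have "0 mod r^m = a mod r^m" by (rule modcancel)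
      then have "a mod r^m = 0" by simp
      then have "r^m dvd a" by (simp add: dvd_eq_mod_eq_0)
      then obtain b where adef: "a = r^m * b" by (rule dvdE)
      have mlt: "m < r^m" using less_pow[OF r] .
      have "ds r a = ds r b"
        using ds_pow[OF r, of 0 m b] adef r by simp
      moreover have "ds r (a + m) = ds r b + ds r m"
        using ds_pow[OF r mlt, of b] adef by simp
      moreover have "y 0 = x a" and "y m = x (a + m)" using a by auto
      ultimately have "y m = (c + ds r b + ds r m) mod r + 1" and "e = (c + ds r b) mod r"
        unfolding e_def using xf by (auto simp: add.assoc)
      then show ?thesis by (simp add: mod_add_left_eq)
    qed
    have "\<exists>n. \<forall>k\<le>1. x (n + k) = y (n + k)" using prox unfolding proximal_def by simp
    then obtain n where n1: "\<forall>k\<le>1. x (n + k) = y (n + k)" by blast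
    have "x n = y n" using n1[rule_format, of 0] by simp
    then have "(ds r n + c) mod r = (ds r n + e) mod r" using xf ey by (simp add: add.commute)
    then have "c mod r = e mod r" using modcancel[of c "ds r n" r e] r by (simp add: add.commute)
    moreover have "e < r" using e r by simp
    ultimately have ce: "c = e" using c by simp
    show "y = x" using xf ey ce by auto
  qed
qed

end
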